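(* In the Banach space $\ell^\infty$ with the norm $\|\cdot\|_\infty$ topology, the set $A=\{e_1\}\cup\{e_1+e_n : n\in\mathbb{N}, n\ge 2\}$ is topologically independent but not minimal; in particular, it is not topologically linearly independent.
   Context: $e_i\in\ell^\infty$ denotes the sequence with $1$ in coordinate $i$ and $0$ elsewhere. A subset $A\subseteq X\setminus\{0\}$ of a topological vector space $X$ is topologically independent if for every neighborhood $W$ of $0$ there is a neighborhood $U$ of $0$ such that for every finite $F\subseteq A$ and integers $\{z_a: a\in F\}$, $\sum_{a\in F}z_a a\in U$ implies $z_a a\in W$ for all $a\in F$; topologically linearly independent is defined the same way with real coefficients instead of integers. $A$ is minimal if $a\notin\overline{\langle A\setminus\{a\}\rangle_{\mathbb{R}}}$ for every $a\in A$ (linear span, closure in $X$). *)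

theory Defs
  imports "HOL-Analysis.Analysis"
begin

text \<open>The Banach space l-infinity: bounded real sequences with the sup norm, realised as
  bounded continuous functions on the discrete space nat (every function on nat is continuous).
  Coordinates are indexed from 0, so the paper's coordinate i corresponds to index i - 1.\<close>

type_synonym linf = "nat \<Rightarrow>\<^sub>C real"

definition unit_seq :: "nat \<Rightarrow> linf" where
  "unit_seq i = Bcontfun (\<lambda>j. if j = i then 1 else 0)"

definition nhd0 :: "'a::{real_vector,topological_space} set \<Rightarrow> bool" where
  "nhd0 W \<longleftrightarrow> (\<exists>V. open V \<and> 0 \<in> V \<and> V \<subseteq> W)"

definition top_independent :: "'a::{real_vector,topological_space} set \<Rightarrow> bool" where
  "top_independent A \<longleftrightarrow> 0 \<notin> A \<and>
     (\<forall>W. nhd0 W \<longrightarrow> (\<exists>U. nhd0 U \<and>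
        (\<forall>F (z::'a \<Rightarrow> int). finite F \<and> F \<subseteq> A \<and> (\<Sum>a\<in>F. of_int (z a) *\<^sub>R a) \<in> U
            \<longrightarrow> (\<forall>a\<in>F. of_int (z a) *\<^sub>R a \<in> W))))"

definition top_lin_independent :: "'a::{real_vector,topological_space} set \<Rightarrow> bool" where
  "top_lin_independent A \<longleftrightarrow> 0 \<notin> A \<and>
     (\<forall>W. nhd0 W \<longrightarrow> (\<exists>U. nhd0 U \<and>
        (\<forall>F (z::'a \<Rightarrow> real). finite F \<and> F \<subseteq> A \<and> (\<Sum>a\<in>F. z a *\<^sub>R a) \<in> U
            \<longrightarrow> (\<forall>a\<in>F. z a *\<^sub>R a \<in> W))))"

definition minimal_set :: "'a::{real_vector,topological_space} set \<Rightarrow> bool" where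
  "minimal_set A \<longleftrightarrow> (\<forall>a\<in>A. a \<notin> closure (span (A - {a})))"

end

theory Submission imports Defs begin

lemma unit_seq_apply[simp]: "apply_bcontfun (unit_seq i) j = (if j = i then 1 else 0)"
proof -
  have "(\<lambda>j. if j = i then 1 else (0::real)) \<in> bcontfun"
    by (rule bcontfun_normI[where b=1]) auto
  thus ?thesis unfolding unit_seq_def by (simp add: Bcontfun_inverse)
qed

lemma sum_apply_bcontfun: "finite F \<Longrightarrow> apply_bcontfun (sum f F) j = (\<Sum>a\<in>F. apply_bcontfun (f a) j)"
  by (induction F rule: finite_induct) auto

lemma abs_apply_le: "\<bar>apply_bcontfun (f::linf) j\<bar> \<le> norm f"
  using norm_bounded[of f j] by simp

lemma nhd0_ball: "r > 0 \<Longrightarrow> nhd0 (ball (0::'a::real_normed_vector) r)"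
  unfolding nhd0_def by (intro exI[of _ "ball 0 r"]) auto

lemma nhd0_E: assumes "nhd0 (U::linf set)" obtains r where "r > 0" "ball 0 r \<subseteq> U"
  using assms unfolding nhd0_def by (meson open_contains_ball order_trans)

lemma e_inj: "unit_seq 0 + unit_seq m = unit_seq 0 + unit_seq n \<Longrightarrow> m = n"
proof -
  assume "unit_seq 0 + unit_seq m = unit_seq 0 + unit_seq n"
  hence "apply_bcontfun (unit_seq 0 + unit_seq m) m = apply_bcontfun (unit_seq 0 + unit_seq n) m" by simp
  thus ?thesis by (auto split: if_splits)
qed

lemma e_ne: "n \<ge> 1 \<Longrightarrow> unit_seq 0 \<noteq> unit_seq 0 + unit_seq n"
proof
  assume "n \<ge> 1" "unit_seq 0 = unit_seq 0 + unit_seq n"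
  hence "apply_bcontfun (unit_seq 0) n = apply_bcontfun (unit_seq 0 + unit_seq n) n" by simp
  thus False using \<open>n \<ge> 1\<close> by simp
qed

lemma approx_e0:
  fixes N :: nat assumes "N \<ge> 1"
  shows "norm ((1 / real N) *\<^sub>R (\<Sum>n\<in>{1..N}. unit_seq 0 + unit_seq n) - unit_seq 0) \<le> 1 / real N"
proof (rule norm_bound)
  fix j
  have "apply_bcontfun ((1 / real N) *\<^sub>R (\<Sum>n\<in>{1..N}. unit_seq 0 + unit_seq n) - unit_seq 0) j
     = (1 / real N) * (\<Sum>n\<in>{1..N}. (if j = 0 then 1 else 0) + (if j = n then 1 else 0)) - (if j = 0 then 1 else 0)"
    by (simp add: sum_apply_bcontfun)
  also have "\<dots> = (1 / real N) * (real N * (if j = 0 then 1 else 0) + (if j \<in> {1..N} then 1 else 0)) - (if j = 0 then 1 else 0)"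
    by (simp add: sum.distrib sum.delta)
  also have "\<dots> = (if j \<in> {1..N} then 1 / real N else 0)"
    using assms by (auto simp: field_simps)
  finally show "norm (apply_bcontfun ((1 / real N) *\<^sub>R (\<Sum>n\<in>{1..N}. unit_seq 0 + unit_seq n) - unit_seq 0) j) \<le> 1 / real N"
    by simp
qed

lemma small_N: "(r::real) > 0 \<Longrightarrow> \<exists>N::nat. N \<ge> 1 \<and> 1 / real N < r"
proof -
  assume "r > 0"
  obtain N :: nat where "1 / r < N" using reals_Archimedean2 by blast
  moreover have "0 < 1 / r" using \<open>r > 0\<close> by simp
  ultimately have Np: "real N > 0" by linarith
  hence "N \<ge> 1" by simp
  moreover have "1 / real N < r" using \<open>1 / r < N\<close> \<open>r > 0\<close> Np by (simp add: field_simps)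
  ultimately show ?thesis by blast
qed

lemma inj_e: "inj_on (\<lambda>n. unit_seq 0 + unit_seq n) S"
  by (auto intro: inj_onI e_inj)

theorem mainTheorem13:
  defines "A \<equiv> {unit_seq 0} \<union> {unit_seq 0 + unit_seq n | n. n \<ge> 1}"
  shows "top_independent A \<and> \<not> minimal_set A \<and> \<not> top_lin_independent A"
proof (intro conjI)
  let ?e = "unit_seq 0"
  have e0A: "?e \<in> A" unfolding A_def by simp
  have eA: "n \<ge> 1 \<Longrightarrow> ?e + unit_seq n \<in> A" for n unfolding A_def by auto
  have normE: "norm ?e \<ge> 1" using abs_apply_le[of ?e 0] by simp
  have clos: "?e \<in> closure (span (A - {?e}))"
  proof (rule closure_approachable[THEN iffD2], intro allI impI)
    fix r :: real assume "r > 0"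
    then obtain N :: nat where N: "N \<ge> 1" "1 / real N < r" using small_N by blast
    let ?y = "(1 / real N) *\<^sub>R (\<Sum>n\<in>{1..N}. ?e + unit_seq n)"
    have "?y \<in> span (A - {?e})"
      by (intro span_mul span_sum span_base) (use eA e_ne in auto)
    moreover have "dist ?y ?e < r"
      using approx_e0[OF N(1)] N(2) by (simp add: dist_norm)
    ultimately show "\<exists>y\<in>span (A - {?e}). dist y ?e < r" by blast
  qed
  show "\<not> minimal_set A" unfolding minimal_set_def using clos e0A by blast
  show "\<not> top_lin_independent A"
  proof
    assume "top_lin_independent A"
    then obtain U where U: "nhd0 U" and
      H: "\<And>F (z::linf \<Rightarrow> real). finite F \<and> F \<subseteq> A \<and> (\<Sum>a\<in>F. z a *\<^sub>R a) \<in> U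
            \<Longrightarrow> (\<forall>a\<in>F. z a *\<^sub>R a \<in> ball 0 (1/2))"
      unfolding top_lin_independent_def using nhd0_ball[of "1/2::real"] by force
    obtain r where r: "r > 0" "ball 0 r \<subseteq> U" using nhd0_E[OF U] by blast
    then obtain N :: nat where N: "N \<ge> 1" "1 / real N < r" using small_N by blast
    define G where "G = (\<lambda>n. ?e + unit_seq n) ` {1..N}"
    define z where "z = (\<lambda>a. if a = ?e then -1 else 1 / real N)"
    have eG: "?e \<notin> G" unfolding G_def using e_ne by auto
    have "(\<Sum>a\<in>insert ?e G. z a *\<^sub>R a) = - ?e + (\<Sum>a\<in>G. z a *\<^sub>R a)"
      using eG by (simp add: G_def z_def)
    also have "(\<Sum>a\<in>G. z a *\<^sub>R a) = (\<Sum>n\<in>{1..N}. (1 / real N) *\<^sub>R (?e + unit_seq n))"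
      unfolding G_def by (subst sum.reindex[OF inj_e]) (use e_ne in \<open>auto simp: z_def intro!: sum.cong\<close>)
    also have "\<dots> = (1 / real N) *\<^sub>R (\<Sum>n\<in>{1..N}. ?e + unit_seq n)"
      by (simp add: scaleR_sum_right)
    finally have "(\<Sum>a\<in>insert ?e G. z a *\<^sub>R a) = (1 / real N) *\<^sub>R (\<Sum>n\<in>{1..N}. ?e + unit_seq n) - ?e"
      by simp
    hence "(\<Sum>a\<in>insert ?e G. z a *\<^sub>R a) \<in> U"
      using approx_e0[OF N(1)] N(2) r(2) by auto
    moreover have "insert ?e G \<subseteq> A" "finite (insert ?e G)" using e0A eA unfolding G_def by auto
    ultimately have "z ?e *\<^sub>R ?e \<in> ball 0 (1/2)" using H by blast
    thus False using normE by (simp add: z_def)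
  qed
  show "top_independent A"
    unfolding top_independent_def
  proof (intro conjI allI impI)
    show "0 \<notin> A"
    proof
      assume "0 \<in> A"
      then consider "0 = ?e" | n where "n \<ge> 1" "0 = ?e + unit_seq n" unfolding A_def by auto
      thus False
      proof cases
        case 1 thus False using normE by simp
      next
        case 2
        hence "apply_bcontfun (0::linf) 0 = apply_bcontfun (?e + unit_seq n) 0" by simp
        thus False using 2(1) by simp
      qed
    qed
    fix W :: "linf set" assume W: "nhd0 W"
    have W0: "0 \<in> W" using W unfolding nhd0_def by blast
    show "\<exists>U. nhd0 U \<and> (\<forall>F (z::linf \<Rightarrow> int). finite F \<and> F \<subseteq> A \<and> (\<Sum>a\<in>F. of_int (z a) *\<^sub>R a) \<in> U
            \<longrightarrow> (\<forall>a\<in>F. of_int (z a) *\<^sub>R a \<in> W))"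
    proof (intro exI conjI allI impI)
      show "nhd0 (ball (0::linf) (1/2))" by (rule nhd0_ball) simp
      fix F and z :: "linf \<Rightarrow> int"
      assume asm: "finite F \<and> F \<subseteq> A \<and> (\<Sum>a\<in>F. of_int (z a) *\<^sub>R a) \<in> ball 0 (1/2)"
      define s where "s = (\<Sum>a\<in>F. of_int (z a) *\<^sub>R a)"
      have fin: "finite F" and FA: "F \<subseteq> A" and ns: "norm s < 1/2"
        using asm by (auto simp: s_def)
      have sj: "apply_bcontfun s j = (\<Sum>a\<in>F. of_int (z a) * apply_bcontfun a j)" for j
        unfolding s_def by (simp add: sum_apply_bcontfun[OF fin])
      have int0: "\<bar>real_of_int k\<bar> < 1/2 \<Longrightarrow> k = 0" for k :: int by linarith
      have z1: "z a = 0" if "a \<in> F" "a \<noteq> ?e" for a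
      proof -
        have "a \<in> {?e + unit_seq n | n. n \<ge> 1}" using that FA unfolding A_def by blast
        then obtain n where n: "n \<ge> 1" "a = ?e + unit_seq n" by blast
        have coord: "apply_bcontfun b n = (if b = a then 1 else 0)" if "b \<in> A" for b
        proof -
          consider "b = ?e" | m where "m \<ge> 1" "b = ?e + unit_seq m" using \<open>b \<in> A\<close> unfolding A_def by auto
          thus ?thesis
          proof cases
            case 1 thus ?thesis using n e_ne[OF n(1)] by simp
          next
            case 2 thus ?thesis using n e_inj[of m n] by auto
          qed
        qed
        have "apply_bcontfun s n = (\<Sum>b\<in>F. of_int (z b) * (if b = a then 1 else 0))"
          unfolding sj using FA coord by (intro sum.cong) auto
        also have "\<dots> = of_int (z a)" using that fin by (simp add: if_distrib sum.delta cong: if_cong)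
        finally have "\<bar>real_of_int (z a)\<bar> < 1/2" using abs_apply_le[of s n] ns by simp
        thus ?thesis by (rule int0)
      qed
      have z2: "z a = 0" if "a \<in> F" for a
      proof (cases "a = ?e")
        case False thus ?thesis using z1 that by blast
      next
        case True
        have coord: "apply_bcontfun b 0 = 1" if "b \<in> A" for b
          using \<open>b \<in> A\<close> unfolding A_def by auto
        have "apply_bcontfun s 0 = (\<Sum>b\<in>F. of_int (z b))"
          unfolding sj using FA coord by (intro sum.cong) auto
        also have "\<dots> = (\<Sum>b\<in>F. if b = a then of_int (z a) else 0)"
          using z1 True by (intro sum.cong) auto
        also have "\<dots> = of_int (z a)" using that fin by (simp add: sum.delta)
        finally have "\<bar>real_of_int (z a)\<bar> < 1/2" using abs_apply_le[of s 0] ns by simp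
        thus ?thesis by (rule int0)
      qed
      show "\<forall>a\<in>F. of_int (z a) *\<^sub>R a \<in> W" using z2 W0 by simp
    qed
  qed
qed

end
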